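(* Pruning is correct, i.e., (1) If ⟨E, C^WW, C^WR⟩ ↪* ⟨E_p, C^WW_p, C^WR_p⟩, then G is SER-acyclic if and only if G_p is SER-acyclic. (2) If ⟨E, C^WW, C^WR⟩ ↪* S_#, then G is not SER-acyclic.
   Context: A history H = (T, SO) consists of a set T of committed transactions (key-value reads R(x,v) and writes W(x,v)) and a session order SO. WriteTx_x denotes the set of transactions writing key x. The hyper-polygraph of H is G = (V, E, (C^WW, C^WR)) where V is the set of transactions, E is the set of known edges (labelled SO, WR, WW, RW with a key; initially the SO edges and the WR edges whose read value has a unique writer), C^WW = {{T →WW(x) S, S →WW(x) T} | T, S ∈ WriteTx_x, T ≠ S}, and C^WR = {{T_i →WR(x) S | T_i writes v to x} | S reads v from x}. A graph G' = (V, E') is compatible with G if E' ⊇ E, E' contains exactly one edge from each constraint in C^WW and in C^WR, and E' is closed under the derivation rule: T' →WR(x) T and T' →WW(x) S in E' imply T →RW(x) S in E'. G is called SER-acyclic if some compatible graph is acyclic (equivalently, for the hyper-polygraph of H, H satisfies Serializability, given H satisfies internal consistency). Pruning is modelled as a transition system ↪ on states ⟨E, C^WW, C^WR⟩, starting from the components of G; a state ⟨E_p, C^WW_p, C^WR_p⟩ corresponds to the hyper-polygraph G_p = (V, E_p, (C^WW_p, C^WR_p)). The rules, applied nondeterministically until none applies, are: - No-Choice: if ∅ ∈ C^WW ∪ C^WR, move to the terminal violation state S_#. - Cycle: if E is cyclic, move to S_#. - WW-Elim: for cons ∈ C^WW containing T →WW(x) T', if E ∪ ({T →WW(x) T'}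 ∪ {S →RW(x) T' | T →WR(x) S ∈ E}) is cyclic, replace cons by cons \ {T →WW(x) T'}. - WR-Elim: for cons ∈ C^WR containing T →WR(x) S, if E ∪ ({T →WR(x) S} ∪ {S →RW(x) T' | T →WW(x) T' ∈ E}) is cyclic, replace cons by cons \ {T →WR(x) S}. - WW-Intro: if a singleton {T →WW(x) T'} ∈ C^WW, remove it from C^WW and add {T →WW(x) T'} ∪ {S →RW(x) T' | T →WR(x) S ∈ E} to E. - WR-Intro: if a singleton {T →WR(x) S} ∈ C^WR, remove it from C^WR and add {T →WR(x) S} ∪ {S →RW(x) T' | T →WW(x) T' ∈ E} to E. ↪* denotes a finite sequence of such transitions. *)

theory Defs
  imports Main
begin

datatype ('k, 'v) op = R 'k 'v | W 'k 'v

record ('t, 'k, 'v) history =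
  txns :: "'t set"
  ops  :: "'t \<Rightarrow> ('k, 'v) op list"
  so   :: "'t rel"

definition wf_history :: "('t, 'k, 'v) history \<Rightarrow> bool" where
  "wf_history H \<longleftrightarrow> so H \<subseteq> txns H \<times> txns H"

definition writes :: "('t, 'k, 'v) history \<Rightarrow> 't \<Rightarrow> 'k \<Rightarrow> 'v \<Rightarrow> bool" where
  "writes H t x v \<longleftrightarrow> t \<in> txns H \<and> W x v \<in> set (ops H t)"

definition reads :: "('t, 'k, 'v) history \<Rightarrow> 't \<Rightarrow> 'k \<Rightarrow> 'v \<Rightarrow> bool" where
  "reads H t x v \<longleftrightarrow> t \<in> txns H \<and> R x v \<in> set (ops H t)"

definition WriteTx :: "('t, 'k, 'v) history \<Rightarrow> 'k \<Rightarrow> 't set" where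
  "WriteTx H x = {t \<in> txns H. \<exists>v. W x v \<in> set (ops H t)}"

datatype 'k label = SO | WR 'k | WW 'k | RW 'k

type_synonym ('t, 'k) edge = "'t \<times> 'k label \<times> 't"

definition cyclic :: "('t, 'k) edge set \<Rightarrow> bool" where
  "cyclic E \<longleftrightarrow> \<not> acyclic {(a, b). \<exists>l. (a, l, b) \<in> E}"

type_synonym ('t, 'k) hpg =
  "'t set \<times> ('t, 'k) edge set \<times> ('t, 'k) edge set set \<times> ('t, 'k) edge set set"

definition hyper_polygraph :: "('t, 'k, 'v) history \<Rightarrow> ('t, 'k) hpg" where
  "hyper_polygraph H =
    (txns H,
     {(t, SO, s) | t s. (t, s) \<in> so H}
       \<union> {(t, WR x, s) | t x s. \<exists>v. reads H s x v \<and> (\<forall>t'. writes H t' x v \<longleftrightarrow> t' = t)},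
     {{(t, WW x, s), (s, WW x, t)} | t s x. t \<in> WriteTx H x \<and> s \<in> WriteTx H x \<and> t \<noteq> s},
     {{(t, WR x, s) | t. writes H t x v} | s x v. reads H s x v})"

definition rw_closed :: "('t, 'k) edge set \<Rightarrow> bool" where
  "rw_closed E' \<longleftrightarrow>
     (\<forall>t' t s x. (t', WR x, t) \<in> E' \<and> (t', WW x, s) \<in> E' \<longrightarrow> (t, RW x, s) \<in> E')"

definition compatible :: "('t, 'k) hpg \<Rightarrow> ('t, 'k) edge set \<Rightarrow> bool" where
  "compatible G E' \<longleftrightarrow>
    (case G of (V, E, Cww, Cwr) \<Rightarrow>
       (\<forall>(a, l, b) \<in> E'. a \<in> V \<and> b \<in> V)
       \<and> E \<subseteq> E'
       \<and> (\<forall>c \<in> Cww. \<exists>!e. e \<in> c \<and> e \<in> E')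
       \<and> (\<forall>c \<in> Cwr. \<exists>!e. e \<in> c \<and> e \<in> E')
       \<and> rw_closed E')"

definition ser_acyclic :: "('t, 'k) hpg \<Rightarrow> bool" where
  "ser_acyclic G \<longleftrightarrow> (\<exists>E'. compatible G E' \<and> \<not> cyclic E')"

datatype ('t, 'k) pstate =
    St "('t, 'k) edge set" "('t, 'k) edge set set" "('t, 'k) edge set set"
  | Viol  \<comment> \<open>the terminal violation state S_#\<close>

inductive prune_step :: "('t, 'k) pstate \<Rightarrow> ('t, 'k) pstate \<Rightarrow> bool" where
  no_choice: "{} \<in> Cww \<union> Cwr \<Longrightarrow> prune_step (St E Cww Cwr) Viol"
| cycle: "cyclic E \<Longrightarrow> prune_step (St E Cww Cwr) Viol"
| ww_elim: "\<lbrakk> c \<in> Cww; (t, WW x, t') \<in> c;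
             cyclic (E \<union> ({(t, WW x, t')} \<union> {(s, RW x, t') | s. (t, WR x, s) \<in> E})) \<rbrakk>
   \<Longrightarrow> prune_step (St E Cww Cwr) (St E ((Cww - {c}) \<union> {c - {(t, WW x, t')}}) Cwr)"
| wr_elim: "\<lbrakk> c \<in> Cwr; (t, WR x, s) \<in> c;
             cyclic (E \<union> ({(t, WR x, s)} \<union> {(s, RW x, t') | t'. (t, WW x, t') \<in> E})) \<rbrakk>
   \<Longrightarrow> prune_step (St E Cww Cwr) (St E Cww ((Cwr - {c}) \<union> {c - {(t, WR x, s)}}))"
| ww_intro: "{(t, WW x, t')} \<in> Cww
   \<Longrightarrow> prune_step (St E Cww Cwr)
         (St (E \<union> ({(t, WW x, t')} \<union> {(s, RW x, t') | s. (t, WR x, s) \<in> E}))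
             (Cww - {{(t, WW x, t')}}) Cwr)"
| wr_intro: "{(t, WR x, s)} \<in> Cwr
   \<Longrightarrow> prune_step (St E Cww Cwr)
         (St (E \<union> ({(t, WR x, s)} \<union> {(s, RW x, t') | t'. (t, WW x, t') \<in> E}))
             Cww (Cwr - {{(t, WR x, s)}}))"

end

theory Submission
  imports Defs
begin

lemma cyclic_mono: "cyclic A \<Longrightarrow> A \<subseteq> B \<Longrightarrow> cyclic B"
  unfolding cyclic_def
proof -
  assume a: "\<not> acyclic {(a, b). \<exists>l. (a, l, b) \<in> A}" and s: "A \<subseteq> B"
  have "{(a, b). \<exists>l. (a, l, b) \<in> A} \<subseteq> {(a, b). \<exists>l. (a, l, b) \<in> B}" using s by blast
  then show "\<not> acyclic {(a, b). \<exists>l. (a, l, b) \<in> B}" using a acyclic_subset by blast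
qed

definition exone :: "('t,'k) edge set set \<Rightarrow> ('t,'k) edge set \<Rightarrow> bool" where
  "exone C E' \<longleftrightarrow> (\<forall>d\<in>C. \<exists>!x. x\<in>d \<and> x\<in>E')"

lemma compat_iff: "compatible (V,E,C,D) E' \<longleftrightarrow>
  ((\<forall>(a, l, b) \<in> E'. a \<in> V \<and> b \<in> V) \<and> E \<subseteq> E' \<and> exone C E' \<and> exone D E' \<and> rw_closed E')"
  unfolding compatible_def exone_def by simp

lemma ball_swap:
  assumes "c \<in> C" "P c' = P c"
  shows "(\<forall>d\<in>C. P d) \<longleftrightarrow> (\<forall>d\<in>(C-{c})\<union>{c'}. P d)"
  using assms by auto

lemma ball_del:
  assumes "P c"
  shows "(\<forall>d\<in>C. P d) \<longleftrightarrow> (\<forall>d\<in>C-{c}. P d)"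
  using assms by auto

lemma exone_remove:
  assumes "e \<notin> E'" "c \<in> C"
  shows "exone C E' \<longleftrightarrow> exone ((C-{c})\<union>{c-{e}}) E'"
proof -
  have k: "\<And>x. (x \<in> c - {e} \<and> x \<in> E') = (x \<in> c \<and> x \<in> E')" using assms(1) by auto
  have "(\<exists>!x. x \<in> c - {e} \<and> x \<in> E') = (\<exists>!x. x \<in> c \<and> x \<in> E')" by (simp only: k)
  then show ?thesis unfolding exone_def by (rule ball_swap[OF assms(2)])
qed

lemma exone_intro:
  assumes "e \<in> E'"
  shows "exone C E' \<longleftrightarrow> exone (C-{{e}}) E'"
proof -
  have "\<exists>!x. x\<in>{e} \<and> x\<in>E'" using assms by auto
  then show ?thesis unfolding exone_def by (rule ball_del)
qed

lemma step_compat: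
  assumes "prune_step s1 s2" "s1 = St E1 C1 D1" "s2 = St E2 C2 D2" "\<not> cyclic E'"
  shows "compatible (V,E1,C1,D1) E' \<longleftrightarrow> compatible (V,E2,C2,D2) E'"
  using assms(1)
proof cases
  case (ww_elim c Cww t x t' E Cwr)
  have eqs: "E1 = E" "C1 = Cww" "D1 = Cwr" "E2 = E" "C2 = (Cww - {c}) \<union> {c - {(t, WW x, t')}}" "D2 = Cwr"
    using ww_elim assms(2,3) by simp_all
  have ne: "(t, WW x, t') \<notin> E'" if "E \<subseteq> E'" "rw_closed E'"
  proof
    assume i: "(t, WW x, t') \<in> E'"
    have rw: "(s, RW x, t') \<in> E'" if "(t, WR x, s) \<in> E" for s
      using \<open>rw_closed E'\<close> \<open>E \<subseteq> E'\<close> that i unfolding rw_closed_def by blast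
    have "E \<union> ({(t, WW x, t')} \<union> {(s, RW x, t') | s. (t, WR x, s) \<in> E}) \<subseteq> E'"
      using that(1) i rw by blast
    then show False using ww_elim(5) assms(4) cyclic_mono by blast
  qed
  have key: "E \<subseteq> E' \<and> rw_closed E' \<Longrightarrow> exone Cww E' = exone ((Cww - {c}) \<union> {c - {(t, WW x, t')}}) E'"
    using ne exone_remove[OF _ ww_elim(3)] by blast
  show ?thesis unfolding eqs compat_iff using key by blast
next
  case (wr_elim c Cwr t x s E Cww)
  have eqs: "E1 = E" "C1 = Cww" "D1 = Cwr" "E2 = E" "D2 = (Cwr - {c}) \<union> {c - {(t, WR x, s)}}" "C2 = Cww"
    using wr_elim assms(2,3) by simp_all
  have ne: "(t, WR x, s) \<notin> E'" if "E \<subseteq> E'" "rw_closed E'"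
  proof
    assume i: "(t, WR x, s) \<in> E'"
    have rw: "(s, RW x, t') \<in> E'" if "(t, WW x, t') \<in> E" for t'
      using \<open>rw_closed E'\<close> \<open>E \<subseteq> E'\<close> that i unfolding rw_closed_def by blast
    have "E \<union> ({(t, WR x, s)} \<union> {(s, RW x, t') | t'. (t, WW x, t') \<in> E}) \<subseteq> E'"
      using that(1) i rw by blast
    then show False using wr_elim(5) assms(4) cyclic_mono by blast
  qed
  have key: "E \<subseteq> E' \<and> rw_closed E' \<Longrightarrow> exone Cwr E' = exone ((Cwr - {c}) \<union> {c - {(t, WR x, s)}}) E'"
    using ne exone_remove[OF _ wr_elim(3)] by blast
  show ?thesis unfolding eqs compat_iff using key by blast
next
  case (ww_intro t x t' Cww E Cwr)
  have eqs: "E1 = E" "C1 = Cww" "D1 = Cwr" "E2 = E \<union> ({(t, WW x, t')} \<union> {(s, RW x, t') | s. (t, WR x, s) \<in> E})"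
    "C2 = Cww - {{(t, WW x, t')}}" "D2 = Cwr"
    using ww_intro assms(2,3) by simp_all
  have sub: "E2 \<subseteq> E'" if "E \<subseteq> E'" "rw_closed E'" "(t, WW x, t') \<in> E'"
  proof -
    have rw: "(s, RW x, t') \<in> E'" if "(t, WR x, s) \<in> E" for s
      using \<open>rw_closed E'\<close> \<open>E \<subseteq> E'\<close> that \<open>(t, WW x, t') \<in> E'\<close> unfolding rw_closed_def by blast
    then show ?thesis unfolding eqs using that by blast
  qed
  show ?thesis
  proof
    assume c: "compatible (V,E1,C1,D1) E'"
    then have i: "(t, WW x, t') \<in> E'" using ww_intro(3) unfolding eqs compat_iff exone_def by blast
    have "E2 \<subseteq> E'" using c i sub unfolding eqs compat_iff by blast
    then show "compatible (V,E2,C2,D2) E'" using c exone_intro[OF i, of Cww]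
      unfolding eqs compat_iff by blast
  next
    assume c: "compatible (V,E2,C2,D2) E'"
    then have i: "(t, WW x, t') \<in> E'" unfolding eqs compat_iff by blast
    then show "compatible (V,E1,C1,D1) E'" using c exone_intro[OF i, of Cww]
      unfolding eqs compat_iff by blast
  qed
next
  case (wr_intro t x s Cwr E Cww)
  have eqs: "E1 = E" "C1 = Cww" "D1 = Cwr" "E2 = E \<union> ({(t, WR x, s)} \<union> {(s, RW x, t') | t'. (t, WW x, t') \<in> E})"
    "D2 = Cwr - {{(t, WR x, s)}}" "C2 = Cww"
    using wr_intro assms(2,3) by simp_all
  have sub: "E2 \<subseteq> E'" if "E \<subseteq> E'" "rw_closed E'" "(t, WR x, s) \<in> E'"
  proof -
    have rw: "(s, RW x, t') \<in> E'" if "(t, WW x, t') \<in> E" for t'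
      using \<open>rw_closed E'\<close> \<open>E \<subseteq> E'\<close> that \<open>(t, WR x, s) \<in> E'\<close> unfolding rw_closed_def by blast
    then show ?thesis unfolding eqs using that by blast
  qed
  show ?thesis
  proof
    assume c: "compatible (V,E1,C1,D1) E'"
    then have i: "(t, WR x, s) \<in> E'" using wr_intro(3) unfolding eqs compat_iff exone_def by blast
    have "E2 \<subseteq> E'" using c i sub unfolding eqs compat_iff by blast
    then show "compatible (V,E2,C2,D2) E'" using c exone_intro[OF i, of Cwr]
      unfolding eqs compat_iff by blast
  next
    assume c: "compatible (V,E2,C2,D2) E'"
    then have i: "(t, WR x, s) \<in> E'" unfolding eqs compat_iff by blast
    then show "compatible (V,E1,C1,D1) E'" using c exone_intro[OF i, of Cwr]
      unfolding eqs compat_iff by blast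
  qed
next
  case no_choice
  then show ?thesis using assms(3) by simp
next
  case cycle
  then show ?thesis using assms(3) by simp
qed

lemma step_viol:
  assumes "prune_step (St E1 C1 D1) Viol"
  shows "\<not> ser_acyclic (V,E1,C1,D1)"
  using assms
proof cases
  case no_choice
  then show ?thesis unfolding ser_acyclic_def compatible_def by auto
next
  case cycle
  then show ?thesis unfolding ser_acyclic_def compatible_def using cyclic_mono by auto
qed

lemma invariant:
  assumes "prune_step\<^sup>*\<^sup>* (St E Cww Cwr) s"
  shows "case s of St Ep Cp Dp \<Rightarrow> (\<forall>E'. \<not> cyclic E' \<longrightarrow>
            (compatible (V,E,Cww,Cwr) E' \<longleftrightarrow> compatible (V,Ep,Cp,Dp) E'))
          | Viol \<Rightarrow> \<not> ser_acyclic (V,E,Cww,Cwr)"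
  using assms
proof (induction rule: rtranclp_induct)
  case base
  then show ?case by simp
next
  case (step y z)
  show ?case
  proof (cases y)
    case (St Ey Cy Dy)
    note yS = St
    show ?thesis
    proof (cases z)
      case (St Ez Cz Dz)
      then show ?thesis using step yS step_compat[OF step(2) yS St, of _ V] by auto
    next
      case Viol
      have nv: "\<not> ser_acyclic (V,Ey,Cy,Dy)" using step_viol step(2) yS Viol by blast
      show ?thesis using step.IH yS Viol nv unfolding ser_acyclic_def by auto
    qed
  next
    case Viol
    then show ?thesis using step(2) by (auto elim: prune_step.cases)
  qed
qed

theorem theoremE1:
  fixes H :: "('t, 'k, 'v) history"
  assumes "wf_history H"
    and "hyper_polygraph H = (V, E, Cww, Cwr)"
  shows "(\<forall>Ep Cwwp Cwrp. prune_step\<^sup>*\<^sup>* (St E Cww Cwr) (St Ep Cwwp Cwrp) \<longrightarrow>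
            (ser_acyclic (V, E, Cww, Cwr) \<longleftrightarrow> ser_acyclic (V, Ep, Cwwp, Cwrp)))
       \<and> (prune_step\<^sup>*\<^sup>* (St E Cww Cwr) Viol \<longrightarrow> \<not> ser_acyclic (V, E, Cww, Cwr))"
proof (intro conjI allI impI)
  fix Ep Cwwp Cwrp
  assume "prune_step\<^sup>*\<^sup>* (St E Cww Cwr) (St Ep Cwwp Cwrp)"
  from invariant[OF this, of V] show "ser_acyclic (V, E, Cww, Cwr) \<longleftrightarrow> ser_acyclic (V, Ep, Cwwp, Cwrp)"
    unfolding ser_acyclic_def by auto
next
  assume "prune_step\<^sup>*\<^sup>* (St E Cww Cwr) Viol"
  from invariant[OF this, of V] show "\<not> ser_acyclic (V, E, Cww, Cwr)" by simp
qed

end
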